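(* Let $R$ be a tolerance relation on $\{1,\ldots,n\}$, $A(R)$, $T$ as in the context, and let $v\in\mathbb{C}^n$ be a unit vector. Then $T(P_v)$ is the weak density matrix of a pure state of $A(R)$ (i.e. the state $a\mapsto\mathrm{Tr}(T(P_v)a)$ of $A(R)$ is pure) if and only if $v$ is $R$-tolerant. More precisely, the restriction map $F:\mathcal{S}(M_n(\mathbb{C}))\to\mathcal{S}(A(R))$ gives a bijection between the set of $R$-tolerant pure states of $M_n(\mathbb{C})$ and the set of pure states of $A(R)$.
   Context: A tolerance relation on a set is a reflexive and symmetric relation; its graph has an edge between $i\ne j$ whenever $(i,j)\in R$. $T(b)=\sum_{(i,j)\in R}E_{ii}bE_{jj}$ for $b\in M_n(\mathbb{C})$, and $A(R)=T(M_n(\mathbb{C}))$, an operator system whose states are linear functionals $\varphi$ with $\varphi(a)\ge0$ for positive semidefinite $a\in A(R)$ and $\varphi(1)=1$; pure states are extremal states. For a unit vector $v$, $P_v=(v_i\overline{v_j})_{i,j}$ is the orthogonal projection onto $\mathbb{C}v$. For non-zero $v$, $R_v:=\{(i,j)\in R: v_iv_j\ne0\}$, a tolerance relation on $\{i: v_i\neq 0\}$; $v$ is $R$-tolerant if the graph of $R_v$ is connected. A pure state of $M_n(\mathbb{C})$ is $R$-tolerant if its density matrix is $P_v$ for an $R$-tolerant unit vector $v$. $F$ sends a state of $M_n(\mathbb{C})$ to its restriction to $A(R)$. *)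

theory Defs
  imports "HOL-Analysis.Analysis" "HOL-Library.Complex_Order"
begin

text \<open>Index set {1..n} is modelled by a finite type 'n; matrices in M_n(C) are
  complex^'n^'n with entries a$i$j; vectors in C^n are complex^'n.\<close>

definition matunit :: "'n::finite \<Rightarrow> 'n \<Rightarrow> complex^'n^'n" where
  "matunit k l = (\<chi> i j. if i = k \<and> j = l then 1 else 0)"

definition Tmap :: "('n::finite \<times> 'n) set \<Rightarrow> complex^'n^'n \<Rightarrow> complex^'n^'n" where
  "Tmap R b = (\<Sum>(i,j)\<in>R. matunit i i ** b ** matunit j j)"

definition AR :: "('n::finite \<times> 'n) set \<Rightarrow> (complex^'n^'n) set" where
  "AR R = range (Tmap R)"

definition tolerance :: "('n \<times> 'n) set \<Rightarrow> bool" where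
  "tolerance R \<longleftrightarrow> refl R \<and> sym R"

definition Pv :: "complex^'n \<Rightarrow> complex^'n^'n" where
  "Pv v = (\<chi> i j. v$i * cnj (v$j))"

definition Rv :: "('n \<times> 'n) set \<Rightarrow> complex^'n \<Rightarrow> ('n \<times> 'n) set" where
  "Rv R v = {(i,j) \<in> R. v$i * v$j \<noteq> 0}"

definition R_tolerant :: "('n \<times> 'n) set \<Rightarrow> complex^'n \<Rightarrow> bool" where
  "R_tolerant R v \<longleftrightarrow> v \<noteq> 0 \<and>
     (\<forall>i j. v$i \<noteq> 0 \<longrightarrow> v$j \<noteq> 0 \<longrightarrow> (i,j) \<in> (Rv R v)\<^sup>*)"

text \<open>positive semidefinite (complex order: 0 \<le> z iff z is real and nonnegative)\<close>
definition psd :: "complex^'n::finite^'n \<Rightarrow> bool" where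
  "psd a \<longleftrightarrow> (\<forall>x::complex^'n. 0 \<le> (\<Sum>i\<in>UNIV. \<Sum>j\<in>UNIV. cnj (x$i) * a$i$j * x$j))"

definition msmult :: "complex \<Rightarrow> complex^'n^'n \<Rightarrow> complex^'n^'n" where
  "msmult c a = (\<chi> i j. c * a$i$j)"

text \<open>Functionals on a subspace S of M_n are represented extensionally:
  functions that vanish outside S.\<close>
definition lin_on :: "(complex^'n^'n) set \<Rightarrow> (complex^'n^'n \<Rightarrow> complex) \<Rightarrow> bool" where
  "lin_on S \<phi> \<longleftrightarrow> (\<forall>a\<in>S. \<forall>b\<in>S. \<phi> (a + b) = \<phi> a + \<phi> b) \<and>
                   (\<forall>c. \<forall>a\<in>S. \<phi> (msmult c a) = c * \<phi> a)"

definition state_of :: "(complex^'n::finite^'n) set \<Rightarrow> (complex^'n^'n \<Rightarrow> complex) \<Rightarrow> bool" where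
  "state_of S \<phi> \<longleftrightarrow> lin_on S \<phi> \<and> (\<forall>a\<in>S. psd a \<longrightarrow> 0 \<le> \<phi> a) \<and>
       \<phi> (mat 1) = 1 \<and> (\<forall>a. a \<notin> S \<longrightarrow> \<phi> a = 0)"

definition pure_state_of :: "(complex^'n::finite^'n) set \<Rightarrow> (complex^'n^'n \<Rightarrow> complex) \<Rightarrow> bool" where
  "pure_state_of S \<phi> \<longleftrightarrow> state_of S \<phi> \<and>
     (\<forall>\<psi>1 \<psi>2 (t::real). state_of S \<psi>1 \<and> state_of S \<psi>2 \<and> 0 < t \<and> t < 1 \<and>
        \<phi> = (\<lambda>a. of_real t * \<psi>1 a + of_real (1 - t) * \<psi>2 a) \<longrightarrow> \<psi>1 = \<phi> \<and> \<psi>2 = \<phi>)"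

definition restr_to :: "(complex^'n^'n) set \<Rightarrow> (complex^'n^'n \<Rightarrow> complex) \<Rightarrow> (complex^'n^'n \<Rightarrow> complex)" where
  "restr_to S \<phi> = (\<lambda>a. if a \<in> S then \<phi> a else 0)"

definition R_tolerant_pure_state :: "('n::finite \<times> 'n) set \<Rightarrow> (complex^'n^'n \<Rightarrow> complex) \<Rightarrow> bool" where
  "R_tolerant_pure_state R \<phi> \<longleftrightarrow> pure_state_of UNIV \<phi> \<and>
     (\<exists>v. norm v = 1 \<and> R_tolerant R v \<and> (\<forall>a. \<phi> a = trace (Pv v ** a)))"

end

theory Submission
  imports Defs
begin
definition sf :: "complex^'n::finite^'n \<Rightarrow> complex^'n \<Rightarrow> complex^'n \<Rightarrow> complex" where
  "sf a x y = (\<Sum>i\<in>UNIV. \<Sum>j\<in>UNIV. cnj (x$i) * a$i$j * y$j)"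

definition ip :: "complex^'n::finite \<Rightarrow> complex^'n \<Rightarrow> complex" where
  "ip w x = (\<Sum>i\<in>UNIV. cnj (w$i) * x$i)"

lemma psd_sf: "psd a \<longleftrightarrow> (\<forall>x. 0 \<le> sf a x x)"
  by (simp add: psd_def sf_def)

lemma trace_mult: "trace (X ** Y) = (\<Sum>i\<in>UNIV. \<Sum>j\<in>UNIV. X$i$j * Y$j$i)"
  by (simp add: trace_def matrix_matrix_mult_def)

lemma trace_Pv: "trace (Pv v ** a) = sf a v v"
proof -
  have "trace (Pv v ** a) = (\<Sum>i\<in>UNIV. \<Sum>j\<in>UNIV. v$i * cnj (v$j) * a$j$i)"
    by (simp add: trace_mult Pv_def)
  also have "\<dots> = (\<Sum>j\<in>UNIV. \<Sum>i\<in>UNIV. v$i * cnj (v$j) * a$j$i)"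
    by (rule sum.swap)
  also have "\<dots> = sf a v v"
    by (simp add: sf_def mult_ac)
  finally show ?thesis .
qed

lemma sf_add_left: "sf a (x + y) z = sf a x z + sf a y z"
  by (simp add: sf_def algebra_simps sum.distrib)
lemma sf_add_right: "sf a z (x + y) = sf a z x + sf a z y"
  by (simp add: sf_def algebra_simps sum.distrib)
lemma sf_scale_left: "sf a (c *s x) y = cnj c * sf a x y"
  by (simp add: sf_def algebra_simps sum_distrib_left)
lemma sf_scale_right: "sf a x (c *s y) = c * sf a x y"
  by (simp add: sf_def algebra_simps sum_distrib_left)
lemma sf_diff_left: "sf a (x - y) z = sf a x z - sf a y z"
  by (simp add: sf_def algebra_simps sum_subtractf)
lemma sf_diff_right: "sf a z (x - y) = sf a z x - sf a z y"
  by (simp add: sf_def algebra_simps sum_subtractf)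
lemma sf_zero_left[simp]: "sf a 0 y = 0" by (simp add: sf_def)
lemma sf_zero_right[simp]: "sf a x 0 = 0" by (simp add: sf_def)

lemma sf_mat_add: "sf (a + b) x y = sf a x y + sf b x y"
  by (simp add: sf_def algebra_simps sum.distrib)
lemma sf_mat_diff: "sf (a - b) x y = sf a x y - sf b x y"
  by (simp add: sf_def algebra_simps sum_subtractf)
lemma sf_mat_scaleR: "sf (c *\<^sub>R b) x y = of_real c * sf b x y"
proof -
  have e: "\<And>i j. (c *\<^sub>R b)$i$j = of_real c * b$i$j"
    by (metis vector_scaleR_component scaleR_conv_of_real)
  show ?thesis unfolding sf_def e by (simp add: sum_distrib_left mult_ac)
qed

lemma sf_axis_left: "sf a (axis i 1) y = (\<Sum>j\<in>UNIV. a$i$j * y$j)"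
proof -
  have "sf a (axis i 1) y = (\<Sum>k\<in>UNIV. (if k = i then (\<Sum>j\<in>UNIV. a$k$j * y$j) else 0))"
    unfolding sf_def by (rule sum.cong) (auto simp: axis_def)
  thus ?thesis by simp
qed

lemma sf_axis: "sf a (axis i 1) (axis j 1) = a$i$j"
proof -
  have "sf a (axis i 1) (axis j 1) = (\<Sum>k\<in>UNIV. (if k = j then a$i$k else 0))"
    unfolding sf_axis_left by (rule sum.cong) (auto simp: axis_def)
  thus ?thesis by simp
qed

lemma sf_Pv: "sf (Pv w) x y = cnj (ip w x) * ip w y"
proof -
  have "sf (Pv w) x y = (\<Sum>i\<in>UNIV. \<Sum>j\<in>UNIV. (cnj (x$i) * w$i) * (cnj (w$j) * y$j))"
    by (simp add: sf_def Pv_def mult_ac)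
  also have "\<dots> = (\<Sum>i\<in>UNIV. cnj (x$i) * w$i) * (\<Sum>j\<in>UNIV. cnj (w$j) * y$j)"
    by (simp add: sum_product)
  also have "(\<Sum>i\<in>UNIV. cnj (x$i) * w$i) = cnj (ip w x)"
    by (simp add: ip_def mult_ac)
  finally show ?thesis by (simp add: ip_def)
qed

lemma cnj_mult_self: "cnj z * z = of_real (cmod z ^ 2)"
  by (metis complex_norm_square mult.commute of_real_power)

lemma sf_Pv_self: "sf (Pv w) x x = of_real (cmod (ip w x) ^ 2)"
  by (simp add: sf_Pv cnj_mult_self)

lemma psd_Pv: "psd (Pv w)"
  unfolding psd_sf sf_Pv_self by (simp add: less_eq_complex_def)

lemma nonneg_complex_real: "0 \<le> (z::complex) \<Longrightarrow> z = of_real (Re z) \<and> 0 \<le> Re z"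
  by (simp add: less_eq_complex_def complex_eq_iff)

lemma psd_herm_sf:
  assumes "psd a" shows "sf a y x = cnj (sf a x y)"
proof -
  have h: "\<And>z. Im (sf a z z) = 0" using assms unfolding psd_sf by (simp add: less_eq_complex_def)
  have e1: "sf a (x + y) (x + y) = sf a x x + sf a x y + sf a y x + sf a y y"
    by (simp add: sf_add_left sf_add_right)
  have e2: "sf a (x + \<i> *s y) (x + \<i> *s y) = sf a x x + \<i> * sf a x y - \<i> * sf a y x + sf a y y"
    by (simp add: sf_add_left sf_add_right sf_scale_left sf_scale_right algebra_simps)
  have i1: "Im (sf a x y + sf a y x) = 0" using h[of "x+y"] h[of x] h[of y] e1 by simp
  have i2: "Re (sf a x y - sf a y x) = 0" using h[of "x + \<i> *s y"] h[of x] h[of y] e2 by simp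
  show ?thesis using i1 i2 by (simp add: complex_eq_iff)
qed

lemma psd_herm: "psd a \<Longrightarrow> a$j$i = cnj (a$i$j)"
  using psd_herm_sf[of a "axis i 1" "axis j 1"] by (simp add: sf_axis)

lemma psd_diag: "psd a \<Longrightarrow> 0 \<le> a$i$i"
  using sf_axis[of a i i] unfolding psd_sf by metis

lemma psd_sf_real: "psd a \<Longrightarrow> sf a x x = of_real (Re (sf a x x)) \<and> 0 \<le> Re (sf a x x)"
  using nonneg_complex_real psd_sf by blast

lemma quad_cs:
  fixes A D :: real and C :: complex
  assumes Q: "\<And>\<alpha> \<beta>. 0 \<le> Re (of_real A * (cnj \<alpha> * \<alpha>) + of_real D * (cnj \<beta> * \<beta>) + cnj \<alpha> * \<beta> * C + cnj \<beta> * \<alpha> * cnj C)"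
    and D: "D \<ge> 0"
  shows "cmod C ^ 2 \<le> A * D"
proof (cases "D > 0")
  case True
  have "Re (of_real A * (cnj (of_real D) * of_real D) + of_real D * (cnj (- cnj C) * (- cnj C)) + cnj (of_real D) * (- cnj C) * C + cnj (- cnj C) * of_real D * cnj C)
      = D * (A * D - cmod C ^ 2)"
    by (simp add: cmod_power2[unfolded power2_eq_square] algebra_simps power2_eq_square)
  then have "0 \<le> D * (A * D - cmod C ^ 2)" using Q by metis
  then show ?thesis using True by (simp add: zero_le_mult_iff)
next
  case False
  then have D0: "D = 0" using D by simp
  show ?thesis
  proof (rule ccontr)
    assume "\<not> ?thesis"
    then have c: "cmod C ^ 2 > 0" using D0 by simp
    define r where "r = (A + 1) / (2 * cmod C ^ 2)"
    have "Re (of_real A * (cnj 1 * 1) + of_real D * (cnj (- of_real r * cnj C) * (- of_real r * cnj C)) + cnj 1 * (- of_real r * cnj C) * C + cnj (- of_real r * cnj C) * 1 * cnj C)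
      = A - 2 * r * cmod C ^ 2"
      using D0 by (simp add: cmod_power2[unfolded power2_eq_square] algebra_simps power2_eq_square)
    also have "\<dots> = -1" using c by (simp add: r_def field_simps)
    finally show False using Q by (metis neg_0_le_iff_le not_one_le_zero)
  qed
qed

lemma sf_quad:
  "sf a (\<alpha> *s x + \<beta> *s y) (\<alpha> *s x + \<beta> *s y) =
     cnj \<alpha> * \<alpha> * sf a x x + cnj \<beta> * \<beta> * sf a y y + cnj \<alpha> * \<beta> * sf a x y + cnj \<beta> * \<alpha> * sf a y x"
  by (simp add: sf_add_left sf_add_right sf_scale_left sf_scale_right algebra_simps)

lemma psd_cs:
  assumes "psd a"
  shows "cmod (sf a x y) ^ 2 \<le> Re (sf a x x) * Re (sf a y y)"
proof (rule quad_cs)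
  fix \<alpha> \<beta>
  have "0 \<le> Re (sf a (\<alpha> *s x + \<beta> *s y) (\<alpha> *s x + \<beta> *s y))"
    using psd_sf_real[OF assms] by blast
  also have "sf a (\<alpha> *s x + \<beta> *s y) (\<alpha> *s x + \<beta> *s y) =
     of_real (Re (sf a x x)) * (cnj \<alpha> * \<alpha>) + of_real (Re (sf a y y)) * (cnj \<beta> * \<beta>) + cnj \<alpha> * \<beta> * sf a x y + cnj \<beta> * \<alpha> * cnj (sf a x y)"
    unfolding sf_quad psd_herm_sf[OF assms, of y x]
    using psd_sf_real[OF assms, of x] psd_sf_real[OF assms, of y] by (metis mult.commute)
  finally show "0 \<le> Re (of_real (Re (sf a x x)) * (cnj \<alpha> * \<alpha>) + of_real (Re (sf a y y)) * (cnj \<beta> * \<beta>) + cnj \<alpha> * \<beta> * sf a x y + cnj \<beta> * \<alpha> * cnj (sf a x y))" .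
next
  show "0 \<le> Re (sf a y y)" using psd_sf_real[OF assms] by blast
qed

lemma psd_null:
  assumes "psd a" "sf a x x = 0"
  shows "sf a y x = 0"
  using psd_cs[OF assms(1), of y x] assms(2) by simp

lemma psd_entry_cs:
  assumes "psd a"
  shows "cmod (a$i$j) ^ 2 \<le> Re (a$i$i) * Re (a$j$j)"
  using psd_cs[OF assms, of "axis i 1" "axis j 1"] by (simp add: sf_axis)

lemma norm_sq: "norm (u::complex^'n::finite) ^ 2 = (\<Sum>i\<in>UNIV. cmod (u$i) ^ 2)"
  unfolding norm_vec_def L2_set_def by (simp add: sum_nonneg)

lemma psd_add: "psd a \<Longrightarrow> psd b \<Longrightarrow> psd (a + b)"
  unfolding psd_sf sf_mat_add by (simp add: add_nonneg_nonneg)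

lemma psd_scaleR: "psd a \<Longrightarrow> 0 \<le> c \<Longrightarrow> psd (c *\<^sub>R a)"
  unfolding psd_sf sf_mat_scaleR by (simp add: less_eq_complex_def)

lemma psd_zero: "psd 0" unfolding psd_sf by (simp add: sf_def)

lemma psd_sum_list: "(\<And>u. u \<in> set us \<Longrightarrow> psd (f u)) \<Longrightarrow> psd (sum_list (map f us))"
  by (induction us) (auto intro: psd_add psd_zero)

lemma psd_offdiag_zero:
  assumes "psd a" "a$i$i = 0 \<or> a$j$j = 0"
  shows "a$i$j = 0"
  using psd_entry_cs[OF assms(1), of i j] assms(2) by auto

lemma psd_rank1_step:
  assumes p: "psd \<rho>" and k: "\<rho>$k$k \<noteq> 0"
  defines "d \<equiv> Re (\<rho>$k$k)"
  defines "u \<equiv> (\<chi> i. \<rho>$i$k / of_real (sqrt d)) :: complex^'n::finite"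
  shows "psd (\<rho> - Pv u)" "u \<noteq> 0" "\<And>l. (\<rho> - Pv u)$l$l \<noteq> 0 \<Longrightarrow> \<rho>$l$l \<noteq> 0 \<and> l \<noteq> k"
proof -
  have rk: "\<rho>$k$k = of_real d" and d0: "d \<ge> 0" using psd_diag[OF p, of k] unfolding d_def
    by (auto simp: less_eq_complex_def complex_eq_iff)
  then have dpos: "d > 0" using k by auto
  have ipu: "ip u x = sf \<rho> (axis k 1) x / of_real (sqrt d)" for x
  proof -
    have "ip u x = (\<Sum>i\<in>UNIV. \<rho>$k$i * x$i / of_real (sqrt d))"
      unfolding ip_def u_def by (simp add: psd_herm[OF p, of k] mult.commute)
    also have "\<dots> = sf \<rho> (axis k 1) x / of_real (sqrt d)"
      by (simp add: sf_axis_left sum_divide_distrib)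
    finally show ?thesis .
  qed
  show "psd (\<rho> - Pv u)"
    unfolding psd_sf
  proof
    fix x
    have cs: "cmod (sf \<rho> (axis k 1) x) ^ 2 \<le> d * Re (sf \<rho> x x)"
      using psd_cs[OF p, of "axis k 1" x] by (simp add: sf_axis d_def)
    have "cmod (ip u x) ^ 2 = cmod (sf \<rho> (axis k 1) x) ^ 2 / d"
      using dpos by (simp add: ipu norm_divide power_divide)
    also have "\<dots> \<le> Re (sf \<rho> x x)" using cs dpos by (simp add: divide_le_eq mult.commute)
    finally have le: "cmod (ip u x) ^ 2 \<le> Re (sf \<rho> x x)" .
    have "sf (\<rho> - Pv u) x x = of_real (Re (sf \<rho> x x) - cmod (ip u x) ^ 2)"
      unfolding sf_mat_diff sf_Pv_self using psd_sf_real[OF p, of x] by simp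
    then show "0 \<le> sf (\<rho> - Pv u) x x" using le by (simp add: less_eq_complex_def)
  qed
  show "u \<noteq> 0"
  proof
    assume "u = 0"
    then have "u$k = 0" by simp
    then show False using k dpos unfolding u_def by simp
  qed
  fix l assume l: "(\<rho> - Pv u)$l$l \<noteq> 0"
  have sq: "(of_real (sqrt d)::complex)^2 = of_real d" by (metis of_real_power real_sqrt_pow2 d0)
  have e: "(\<rho> - Pv u)$l$l = \<rho>$l$l - \<rho>$l$k * cnj (\<rho>$l$k) / of_real d"
    using dpos sq by (simp add: u_def Pv_def field_simps power2_eq_square[symmetric] )
  show "\<rho>$l$l \<noteq> 0 \<and> l \<noteq> k"
  proof
    show "\<rho>$l$l \<noteq> 0"
    proof
      assume "\<rho>$l$l = 0"
      then have "\<rho>$l$k = 0" using psd_offdiag_zero[OF p] by blast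
      then show False using l e \<open>\<rho>$l$l = 0\<close> by simp
    qed
    show "l \<noteq> k"
    proof
      assume "l = k"
      then have "(\<rho> - Pv u)$l$l = of_real d - of_real d * of_real d / of_real d" using e rk by simp
      then show False using l dpos by simp
    qed
  qed
qed

lemma psd_decomp:
  assumes "psd \<rho>"
  shows "\<exists>us. \<rho> = sum_list (map Pv us) \<and> (\<forall>u\<in>set us. u \<noteq> (0::complex^'n::finite))"
  using assms
proof (induction "card {l. \<rho>$l$l \<noteq> 0}" arbitrary: \<rho> rule: less_induct)
  case less
  show ?case
  proof (cases "\<exists>k. \<rho>$k$k \<noteq> 0")
    case False
    then have "\<And>i j. \<rho>$i$j = 0" using psd_offdiag_zero[OF less.prems] by blast
    then have "\<rho> = 0" by (simp add: vec_eq_iff)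
    then show ?thesis by (intro exI[of _ "[]"]) simp
  next
    case True
    then obtain k where k: "\<rho>$k$k \<noteq> 0" by blast
    define u where "u \<equiv> (\<chi> i. \<rho>$i$k / of_real (sqrt (Re (\<rho>$k$k)))) :: complex^'n"
    note st = psd_rank1_step[OF less.prems k, folded u_def]
    have sub: "{l. (\<rho> - Pv u)$l$l \<noteq> 0} \<subset> {l. \<rho>$l$l \<noteq> 0}"
      using st(3) k by blast
    have "card {l. (\<rho> - Pv u)$l$l \<noteq> 0} < card {l. \<rho>$l$l \<noteq> 0}"
      by (rule psubset_card_mono[OF _ sub]) simp
    from less.hyps[OF this st(1)] obtain us where
      us: "\<rho> - Pv u = sum_list (map Pv us)" "\<forall>u\<in>set us. u \<noteq> 0" by blast
    have "\<rho> = sum_list (map Pv (u # us))" using us(1) by (simp add: diff_eq_eq add.commute)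
    then show ?thesis using us(2) st(2) by (intro exI[of _ "u # us"]) simp
  qed
qed

lemma trace_add_left: "trace ((X + Y) ** a) = trace (X ** a) + trace (Y ** a)"
  by (simp add: trace_mult algebra_simps sum.distrib)

lemma trace_sum_list: "trace (sum_list (map f us) ** a) = (\<Sum>u\<leftarrow>us. trace (f u ** a))"
proof (induction us)
  case Nil
  then show ?case by (simp add: trace_def)
qed (simp_all add: trace_add_left)

lemma trace_psd_nonneg:
  assumes "psd \<rho>" "psd a" shows "0 \<le> trace (\<rho> ** a)"
proof -
  obtain us where us: "\<rho> = sum_list (map Pv us)" using psd_decomp[OF assms(1)] by blast
  have "trace (\<rho> ** a) = (\<Sum>u\<leftarrow>us. sf a u u)" unfolding us trace_sum_list trace_Pv ..
  also have "0 \<le> \<dots>" using assms(2) unfolding psd_sf by (induction us) (auto intro: add_nonneg_nonneg)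
  finally show ?thesis .
qed

lemma trace_Pv_self: "trace (Pv u) = of_real (norm u ^ 2)"
proof -
  have "\<And>i. u$i * cnj (u$i) = of_real (cmod (u$i) ^ 2)"
    by (metis cnj_mult_self mult.commute)
  then show ?thesis by (simp add: trace_def Pv_def norm_sq)
qed

lemma matunit_nth: "matunit k l $ i $ j = (if i = k \<and> j = l then 1 else 0)"
  by (simp add: matunit_def)

lemma matunit_mult3: "(matunit p p ** b ** matunit q q) $ i $ j = (if i = p \<and> j = q then b$p$q else 0)"
proof -
  have 1: "(matunit p p ** b) $ i $ k = (if i = p then b$p$k else 0)" for k
  proof -
    have "(matunit p p ** b)$i$k = (\<Sum>m\<in>UNIV. matunit p p $i$m * b$m$k)" by (simp add: matrix_matrix_mult_def)
    also have "\<dots> = (\<Sum>m\<in>UNIV. if m = p then (if i = p then b$m$k else 0) else 0)"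
      by (intro sum.cong) (auto simp: matunit_nth)
    also have "\<dots> = (if i = p then b$p$k else 0)" by simp
    finally show ?thesis .
  qed
  have "(matunit p p ** b ** matunit q q)$i$j = (\<Sum>k\<in>UNIV. (matunit p p ** b) $i$k * matunit q q $k$j)"
    by (simp add: matrix_matrix_mult_def)
  also have "\<dots> = (\<Sum>k\<in>UNIV. if k = q then (if i = p \<and> j = q then b$p$k else 0) else 0)"
    by (intro sum.cong) (auto simp: matunit_nth 1)
  also have "\<dots> = (if i = p \<and> j = q then b$p$q else 0)" by simp
  finally show ?thesis .
qed

lemma Tmap_nth: "Tmap R b $ i $ j = (if (i,j) \<in> R then b$i$j else 0)"
proof -
  have e: "\<And>a c. (matunit a a ** b ** matunit c c)$i$j = (if (a,c) = (i,j) then b$i$j else 0)"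
    by (auto simp: matunit_mult3)
  have "Tmap R b $ i $ j = (\<Sum>p\<in>R. (if p = (i,j) then b$i$j else 0))"
    unfolding Tmap_def sum_component
    by (rule sum.cong) (auto simp: e split: prod.splits)
  also have "\<dots> = (if (i,j) \<in> R then b$i$j else 0)"
    by (simp add: sum.delta')
  finally show ?thesis .
qed

lemma AR_iff: "a \<in> AR R \<longleftrightarrow> (\<forall>i j. (i,j) \<notin> R \<longrightarrow> a$i$j = 0)"
proof
  assume "a \<in> AR R"
  then obtain b where "a = Tmap R b" unfolding AR_def by blast
  then show "\<forall>i j. (i,j) \<notin> R \<longrightarrow> a$i$j = 0" by (simp add: Tmap_nth)
next
  assume h: "\<forall>i j. (i,j) \<notin> R \<longrightarrow> a$i$j = 0"
  have "Tmap R a = a" using h by (auto simp: vec_eq_iff Tmap_nth)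
  then show "a \<in> AR R" unfolding AR_def by (metis rangeI)
qed

lemma AR_UNIV: "AR UNIV = UNIV" by (auto simp: AR_iff)

lemma restr_UNIV: "restr_to UNIV f = f" by (simp add: restr_to_def)

lemma AR_add: "a \<in> AR R \<Longrightarrow> b \<in> AR R \<Longrightarrow> a + b \<in> AR R" by (simp add: AR_iff)
lemma AR_msmult: "a \<in> AR R \<Longrightarrow> msmult c a \<in> AR R" by (simp add: AR_iff msmult_def)
lemma AR_zero: "0 \<in> AR R" by (simp add: AR_iff)
lemma AR_matunit: "(i,j) \<in> R \<Longrightarrow> matunit i j \<in> AR R" by (auto simp: AR_iff matunit_nth)
lemma AR_mat1: "refl R \<Longrightarrow> mat 1 \<in> AR R" by (auto simp: AR_iff mat_def refl_on_def)

lemma Tmap_AR: "a \<in> AR R \<Longrightarrow> Tmap R a = a" by (auto simp: AR_iff vec_eq_iff Tmap_nth)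

lemma lin_zero: "lin_on (AR R) \<psi> \<Longrightarrow> \<psi> 0 = 0"
proof -
  assume l: "lin_on (AR R) \<psi>"
  have "msmult 0 (0::complex^'a^'a) = 0" by (simp add: msmult_def vec_eq_iff)
  then show ?thesis using l AR_zero unfolding lin_on_def by (metis mult_zero_left)
qed

lemma lin_sum:
  assumes l: "lin_on (AR R) \<psi>" and f: "\<And>p. p \<in> F \<Longrightarrow> f p \<in> AR R" and F: "finite F"
  shows "\<psi> (\<Sum>p\<in>F. f p) = (\<Sum>p\<in>F. \<psi> (f p)) \<and> (\<Sum>p\<in>F. f p) \<in> AR R"
  using F f
proof (induction F rule: finite_induct)
  case empty
  then show ?case using lin_zero[OF l] AR_zero by simp
next
  case (insert x F)
  then have "f x \<in> AR R" "(\<Sum>p\<in>F. f p) \<in> AR R" "\<psi> (\<Sum>p\<in>F. f p) = (\<Sum>p\<in>F. \<psi> (f p))" by auto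
  then show ?case using insert l unfolding lin_on_def by (simp add: AR_add)
qed

definition dens :: "('n::finite \<times> 'n) set \<Rightarrow> (complex^'n^'n \<Rightarrow> complex) \<Rightarrow> complex^'n^'n" where
  "dens R \<psi> = (\<chi> i j. if (j,i) \<in> R then \<psi> (matunit j i) else 0)"

lemma sum_pairs_R:
  fixes g :: "'n::finite \<Rightarrow> 'n \<Rightarrow> complex"
  shows "(\<Sum>p\<in>R. g (fst p) (snd p)) = (\<Sum>i\<in>UNIV. \<Sum>j\<in>UNIV. if (i,j) \<in> R then g i j else 0)"
proof -
  have "(\<Sum>p\<in>R. g (fst p) (snd p)) = (\<Sum>p\<in>UNIV. if p \<in> R then g (fst p) (snd p) else 0)"
    by (simp add: sum.If_cases Int_absorb1)
  also have "\<dots> = (\<Sum>(i,j)\<in>UNIV \<times> UNIV. if (i,j) \<in> R then g i j else 0)"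
    by (simp add: case_prod_beta UNIV_Times_UNIV)
  also have "\<dots> = (\<Sum>i\<in>UNIV. \<Sum>j\<in>UNIV. if (i,j) \<in> R then g i j else 0)"
    by (simp add: sum.cartesian_product)
  finally show ?thesis .
qed

lemma lin_rep:
  assumes l: "lin_on (AR R) \<psi>" and a: "a \<in> AR R"
  shows "\<psi> a = trace (dens R \<psi> ** a)"
proof -
  have dec: "a = (\<Sum>p\<in>R. msmult (a $ fst p $ snd p) (matunit (fst p) (snd p)))"
  proof -
    have "(\<Sum>p\<in>R. msmult (a $ fst p $ snd p) (matunit (fst p) (snd p))) $ i $ j = a$i$j" for i j
    proof -
      have "(\<Sum>p\<in>R. msmult (a $ fst p $ snd p) (matunit (fst p) (snd p))) $ i $ j
          = (\<Sum>p\<in>R. if p = (i,j) then a$i$j else 0)"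
        unfolding sum_component by (rule sum.cong) (auto simp: msmult_def matunit_nth)
      also have "\<dots> = a$i$j" using a by (simp add: sum.delta' AR_iff)
      finally show ?thesis .
    qed
    then show ?thesis by (simp add: vec_eq_iff)
  qed
  have "\<psi> a = (\<Sum>p\<in>R. \<psi> (msmult (a $ fst p $ snd p) (matunit (fst p) (snd p))))"
    by (subst dec, rule conjunct1[OF lin_sum[OF l]]) (auto intro!: AR_msmult AR_matunit)
  also have "\<dots> = (\<Sum>p\<in>R. a $ fst p $ snd p * \<psi> (matunit (fst p) (snd p)))"
    by (intro sum.cong refl) (use l in \<open>auto simp: lin_on_def AR_matunit\<close>)
  also have "\<dots> = (\<Sum>i\<in>UNIV. \<Sum>j\<in>UNIV. if (i,j) \<in> R then a$i$j * \<psi> (matunit i j) else 0)"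
    by (rule sum_pairs_R)
  also have "\<dots> = (\<Sum>j\<in>UNIV. \<Sum>i\<in>UNIV. if (i,j) \<in> R then a$i$j * \<psi> (matunit i j) else 0)"
    by (rule sum.swap)
  also have "\<dots> = trace (dens R \<psi> ** a)"
    unfolding trace_mult dens_def by (intro sum.cong) auto
  finally show ?thesis .
qed

lemma trace_Tmap:
  assumes "sym R" "a \<in> AR R"
  shows "trace (Tmap R b ** a) = trace (b ** a)"
  unfolding trace_mult Tmap_nth
  using assms by (intro sum.cong) (auto simp: AR_iff sym_def)

lemma sf_restrict:
  "sf (Tmap (B \<times> B) D) x x = sf D (\<chi> k. if k \<in> B then x$k else 0) (\<chi> k. if k \<in> B then x$k else 0)"
  unfolding sf_def Tmap_nth by (intro sum.cong) auto

lemma block_psd: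
  assumes h: "\<And>\<alpha> \<beta>. 0 \<le> sf D (\<alpha> *s axis i 1 + \<beta> *s axis j 1) (\<alpha> *s axis i 1 + \<beta> *s axis j 1)"
  shows "psd (Tmap ({i,j} \<times> {i,j}) D)"
  unfolding psd_sf
proof
  fix x :: "complex^_"
  have eq: "(\<chi> k. if k \<in> {i,j} then x$k else 0) = x$i *s axis i 1 + (if i = j then 0 else x$j) *s axis j 1"
    by (auto simp: vec_eq_iff axis_def)
  show "0 \<le> sf (Tmap ({i,j} \<times> {i,j}) D) x x" unfolding sf_restrict eq by (rule h)
qed

lemma Pv_nth: "Pv x $ p $ q = x$p * cnj (x$q)" by (simp add: Pv_def)

lemma Pv_AR:
  assumes t: "tolerance R" and ij: "(i,j) \<in> R"
  shows "Pv (\<alpha> *s axis i 1 + \<beta> *s axis j 1) \<in> AR R"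
proof -
  have "refl R" "sym R" using t unfolding tolerance_def by auto
  then have "(i,i) \<in> R" "(j,j) \<in> R" "(j,i) \<in> R" using ij by (auto simp: refl_on_def sym_def)
  then have R4: "\<And>p q. p \<in> {i,j} \<Longrightarrow> q \<in> {i,j} \<Longrightarrow> (p,q) \<in> R" using ij by blast
  have z: "\<And>k. k \<notin> {i,j} \<Longrightarrow> (\<alpha> *s axis i 1 + \<beta> *s axis j 1 :: complex^_) $ k = 0"
    by (simp add: axis_def)
  show ?thesis unfolding AR_iff
  proof (intro allI impI)
    fix p q assume "(p,q) \<notin> R"
    then have "p \<notin> {i,j} \<or> q \<notin> {i,j}" using R4 by blast
    then have "(\<alpha> *s axis i 1 + \<beta> *s axis j 1 :: complex^_) $ p = 0 \<or> (\<alpha> *s axis i 1 + \<beta> *s axis j 1 :: complex^_) $ q = 0"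
      using z by blast
    then show "Pv (\<alpha> *s axis i 1 + \<beta> *s axis j 1) $ p $ q = 0"
      by (metis Pv_nth mult_zero_left mult_zero_right complex_cnj_zero)
  qed
qed

lemma state_block_psd:
  assumes t: "tolerance R" and s: "state_of (AR R) \<psi>" and ij: "(i,j) \<in> R"
  shows "psd (Tmap ({i,j} \<times> {i,j}) (dens R \<psi>))"
proof (rule block_psd)
  fix \<alpha> \<beta> :: complex
  let ?x = "\<alpha> *s axis i 1 + \<beta> *s axis j 1"
  have inA: "Pv ?x \<in> AR R" by (rule Pv_AR[OF t ij])
  have l: "lin_on (AR R) \<psi>" using s by (simp add: state_of_def)
  have "\<psi> (Pv ?x) = trace (dens R \<psi> ** Pv ?x)"
    by (rule lin_rep[OF l inA])
  also have "\<dots> = sf (dens R \<psi>) ?x ?x" by (metis trace_mul_sym trace_Pv)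
  finally have eq: "\<psi> (Pv ?x) = sf (dens R \<psi>) ?x ?x" .
  have "0 \<le> \<psi> (Pv ?x)" using s inA psd_Pv unfolding state_of_def by blast
  then show "0 \<le> sf (dens R \<psi>) ?x ?x" unfolding eq .
qed

lemma state_herm:
  assumes t: "tolerance R" and s: "state_of (AR R) \<psi>"
  shows "dens R \<psi> $ j $ i = cnj (dens R \<psi> $ i $ j)"
proof (cases "(j,i) \<in> R")
  case True
  note p = state_block_psd[OF t s True]
  show ?thesis using psd_herm[OF p, of j i] by (simp add: Tmap_nth)
next
  case False
  then have "(i,j) \<notin> R" using t unfolding tolerance_def sym_def by blast
  then show ?thesis using False by (simp add: dens_def)
qed

lemma dens_AR: "tolerance R \<Longrightarrow> dens R \<psi> \<in> AR R"
  unfolding AR_iff dens_def tolerance_def sym_def by auto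

lemma state_from_density:
  assumes t: "tolerance R" and p: "psd \<rho>" and tr: "trace \<rho> = 1"
  shows "state_of (AR R) (restr_to (AR R) (\<lambda>a. trace (\<rho> ** a)))"
proof -
  have r: "refl R" using t unfolding tolerance_def by auto
  have "trace (\<rho> ** mat 1) = 1" using tr by (simp add: matrix_mul_rid)
  moreover have "lin_on (AR R) (restr_to (AR R) (\<lambda>a. trace (\<rho> ** a)))"
  proof -
    have "trace (\<rho> ** msmult c a) = c * trace (\<rho> ** a)" for c a
      by (simp add: trace_mult msmult_def sum_distrib_left mult_ac)
    moreover have "trace (\<rho> ** (a + b)) = trace (\<rho> ** a) + trace (\<rho> ** b)" for a b
      by (simp add: matrix_add_ldistrib trace_add)
    ultimately show ?thesis unfolding lin_on_def restr_to_def by (auto simp: AR_add AR_msmult)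
  qed
  moreover have "\<forall>a\<in>AR R. psd a \<longrightarrow> 0 \<le> restr_to (AR R) (\<lambda>a. trace (\<rho> ** a)) a"
    using trace_psd_nonneg[OF p] by (simp add: restr_to_def)
  ultimately show ?thesis
    unfolding state_of_def using AR_mat1[OF r] by (simp add: restr_to_def)
qed

definition DD :: "(complex^'n::finite^'n) set" where
  "DD = {\<rho>. psd \<rho> \<and> trace \<rho> = 1}"

lemma trace_scaleR: "trace (c *\<^sub>R A) = of_real c * trace (A::complex^'n::finite^'n)"
proof -
  have e: "\<And>i j. (c *\<^sub>R A)$i$j = of_real c * A$i$j"
    by (metis vector_scaleR_component scaleR_conv_of_real)
  show ?thesis unfolding trace_def e by (simp add: sum_distrib_left)
qed

lemma convex_DD: "convex (DD :: (complex^'n::finite^'n) set)"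
  unfolding convex_def DD_def
proof (intro ballI allI impI)
  fix x y :: "complex^'n^'n" and u v :: real
  assume x: "x \<in> {\<rho>. psd \<rho> \<and> trace \<rho> = 1}" and y: "y \<in> {\<rho>. psd \<rho> \<and> trace \<rho> = 1}"
    and h: "0 \<le> u" "0 \<le> v" "u + v = 1"
  have "psd (u *\<^sub>R x + v *\<^sub>R y)" using h x y by (intro psd_add psd_scaleR) auto
  moreover have "trace (u *\<^sub>R x + v *\<^sub>R y) = of_real (u + v)" using x y by (simp add: trace_add trace_scaleR)
  ultimately show "u *\<^sub>R x + v *\<^sub>R y \<in> {\<rho>. psd \<rho> \<and> trace \<rho> = 1}" using h by simp
qed

lemma closed_DD: "closed (DD :: (complex^'n::finite^'n) set)"
proof -
  have eq: "DD = {\<rho>::complex^'n^'n. trace \<rho> = 1} \<inter>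
     (\<Inter>x. {\<rho>. 0 \<le> Re (sf \<rho> x x)} \<inter> {\<rho>. Im (sf \<rho> x x) = 0})"
    unfolding DD_def psd_sf less_eq_complex_def by auto
  have c1: "closed {\<rho>::complex^'n^'n. trace \<rho> = 1}"
    unfolding trace_def by (intro closed_Collect_eq continuous_intros)
  have c2: "closed ({\<rho>::complex^'n^'n. 0 \<le> Re (sf \<rho> x x)} \<inter> {\<rho>. Im (sf \<rho> x x) = 0})" for x
    unfolding sf_def by (intro closed_Int closed_Collect_le closed_Collect_eq continuous_intros)
  show ?thesis unfolding eq using c1 c2 by (intro closed_Int closed_INT) auto
qed

lemma norm_vec_le_sum: "norm (x::('a::real_normed_vector)^'n::finite) \<le> (\<Sum>i\<in>UNIV. norm (x$i))"
  unfolding norm_vec_def by (rule L2_set_le_sum) simp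

lemma DD_entry_bound:
  assumes "\<rho> \<in> DD" shows "cmod (\<rho>$i$j) \<le> 1"
proof -
  have p: "psd \<rho>" and tr: "trace \<rho> = 1" using assms by (auto simp: DD_def)
  have diag: "Re (\<rho>$k$k) \<le> 1" for k
  proof -
    have "Re (trace \<rho>) = (\<Sum>l\<in>UNIV. Re (\<rho>$l$l))" by (simp add: trace_def)
    moreover have "Re (\<rho>$k$k) \<le> (\<Sum>l\<in>UNIV. Re (\<rho>$l$l))"
      by (rule member_le_sum) (use psd_diag[OF p] in \<open>auto simp: less_eq_complex_def\<close>)
    ultimately show ?thesis using tr by simp
  qed
  have d0: "0 \<le> Re (\<rho>$k$k)" for k using psd_diag[OF p, of k] by (simp add: less_eq_complex_def)
  have "cmod (\<rho>$i$j) ^ 2 \<le> Re (\<rho>$i$i) * Re (\<rho>$j$j)" by (rule psd_entry_cs[OF p])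
  also have "\<dots> \<le> 1 * 1" using diag d0 by (intro mult_mono) auto
  finally have "cmod (\<rho>$i$j) ^ 2 \<le> 1" by simp
  then show ?thesis by (simp add: power_le_one_iff abs_le_square_iff)
qed

lemma bounded_DD: "bounded (DD :: (complex^'n::finite^'n) set)"
  unfolding bounded_iff
proof (intro exI ballI)
  fix \<rho> :: "complex^'n^'n" assume r: "\<rho> \<in> DD"
  have "norm \<rho> \<le> (\<Sum>i\<in>UNIV. norm (\<rho>$i))" by (rule norm_vec_le_sum)
  also have "\<dots> \<le> (\<Sum>i\<in>UNIV. \<Sum>j\<in>UNIV. norm (\<rho>$i$j))" by (intro sum_mono norm_vec_le_sum)
  also have "\<dots> \<le> (\<Sum>i\<in>(UNIV::'n set). \<Sum>j\<in>(UNIV::'n set). 1)"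
    using DD_entry_bound[OF r] by (intro sum_mono) auto
  finally show "norm \<rho> \<le> real CARD('n) * real CARD('n)" by simp
qed

lemma compact_DD: "compact (DD :: (complex^'n::finite^'n) set)"
  using bounded_DD closed_DD compact_eq_bounded_closed by blast

lemma linear_Tmap: "linear (Tmap R)"
proof (rule linearI)
  fix x y and c :: real
  show "Tmap R (x + y) = Tmap R x + Tmap R y" by (simp add: vec_eq_iff Tmap_nth)
  show "Tmap R (c *\<^sub>R x) = c *\<^sub>R Tmap R x" by (simp add: vec_eq_iff Tmap_nth)
qed

lemma sum_sym_swap:
  assumes "sym R"
  shows "(\<Sum>i\<in>UNIV. \<Sum>j\<in>UNIV. if (i,j) \<in> R then g i j else 0) =
         (\<Sum>i\<in>UNIV. \<Sum>j\<in>UNIV. if (i,j) \<in> R then g j i else (0::'a::comm_monoid_add))"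
proof -
  have "(\<Sum>i\<in>UNIV. \<Sum>j\<in>UNIV. if (i,j) \<in> R then g i j else 0) =
        (\<Sum>j\<in>UNIV. \<Sum>i\<in>UNIV. if (i,j) \<in> R then g i j else 0)" by (rule sum.swap)
  also have "\<dots> = (\<Sum>j\<in>UNIV. \<Sum>i\<in>UNIV. if (j,i) \<in> R then g i j else 0)"
    using assms by (intro sum.cong refl) (auto simp: sym_def)
  finally show ?thesis .
qed

definition hermc :: "('n::finite \<times> 'n) set \<Rightarrow> complex^'n^'n \<Rightarrow> complex^'n^'n" where
  "hermc R a = (\<chi> p q. if (q,p) \<in> R then (cnj (a$q$p) + a$p$q) / 2 else 0)"

lemma inner_complex_eq: "(X * cnj a + cnj X * a) / 2 = of_real (inner a X)"
  by (simp add: complex_eq_iff inner_complex_def algebra_simps)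

lemma trace_hermc:
  assumes sR: "sym R" and X: "\<And>i j. X$j$i = cnj (X$i$j)"
  shows "trace (X ** hermc R a) = of_real (inner a (Tmap R X))"
proof -
  have "trace (X ** hermc R a) = (\<Sum>i\<in>UNIV. \<Sum>j\<in>UNIV. if (i,j) \<in> R then X$i$j * (cnj (a$i$j) + a$j$i) / 2 else 0)"
    unfolding trace_mult hermc_def by (intro sum.cong refl) auto
  also have "\<dots> = (\<Sum>i\<in>UNIV. \<Sum>j\<in>UNIV. if (i,j) \<in> R then X$i$j * cnj (a$i$j) / 2 else 0)
               + (\<Sum>i\<in>UNIV. \<Sum>j\<in>UNIV. if (i,j) \<in> R then X$i$j * a$j$i / 2 else 0)"
    by (simp add: sum.distrib[symmetric] if_distrib algebra_simps add_divide_distrib cong: if_cong)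
  also have "(\<Sum>i\<in>UNIV. \<Sum>j\<in>UNIV. if (i,j) \<in> R then X$i$j * a$j$i / 2 else 0)
           = (\<Sum>i\<in>UNIV. \<Sum>j\<in>UNIV. if (i,j) \<in> R then X$j$i * a$i$j / 2 else 0)"
    by (rule sum_sym_swap[OF sR])
  also have "\<dots> = (\<Sum>i\<in>UNIV. \<Sum>j\<in>UNIV. if (i,j) \<in> R then cnj (X$i$j) * a$i$j / 2 else 0)"
    by (intro sum.cong refl) (subst X, rule refl)
  also have "(\<Sum>i\<in>UNIV. \<Sum>j\<in>UNIV. if (i,j) \<in> R then X$i$j * cnj (a$i$j) / 2 else 0)
       + (\<Sum>i\<in>UNIV. \<Sum>j\<in>UNIV. if (i,j) \<in> R then cnj (X$i$j) * a$i$j / 2 else 0)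
       = (\<Sum>i\<in>UNIV. \<Sum>j\<in>UNIV. of_real (if (i,j) \<in> R then inner (a$i$j) (X$i$j) else 0))"
    unfolding sum.distrib[symmetric]
    by (intro sum.cong refl) (simp add: inner_complex_eq[symmetric] add_divide_distrib)
  also have "\<dots> = of_real (inner a (Tmap R X))"
    by (simp add: inner_vec_def Tmap_nth if_distrib[of "inner _"] cong: if_cong)
  finally show ?thesis .
qed

lemma sf_mat1: "sf (mat 1) x x = of_real (norm x ^ 2)"
proof -
  have "sf (mat 1) x x = (\<Sum>i\<in>UNIV. cnj (x$i) * x$i)"
    unfolding sf_def
  proof (intro sum.cong refl)
    fix i
    have "(\<Sum>j\<in>UNIV. cnj (x$i) * mat 1 $i$j * x$j) = (\<Sum>j\<in>UNIV. if j = i then cnj (x$i) * x$j else 0)"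
      by (intro sum.cong) (auto simp: mat_def)
    then show "(\<Sum>j\<in>UNIV. cnj (x$i) * mat 1 $i$j * x$j) = cnj (x$i) * x$i" by simp
  qed
  also have "\<dots> = (\<Sum>i\<in>UNIV. of_real (cmod (x$i) ^ 2))" by (simp add: cnj_mult_self)
  also have "\<dots> = of_real (norm x ^ 2)" by (simp add: norm_sq)
  finally show ?thesis .
qed

lemma sf_msmult: "sf (msmult k M) x y = k * sf M x y"
  by (simp add: sf_def msmult_def sum_distrib_left mult_ac)

lemma scaleR_as_smult: "r *\<^sub>R (x::complex^'n::finite) = of_real r *s x"
proof (rule iffD2[OF vec_eq_iff], rule allI)
  fix i show "(r *\<^sub>R x) $ i = (of_real r *s x) $ i"
    by (metis vector_scaleR_component vector_smult_component scaleR_conv_of_real)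
qed

lemma extension:
  assumes t: "tolerance R" and s: "state_of (AR R) \<psi>"
  shows "\<exists>\<rho>. psd \<rho> \<and> trace \<rho> = 1 \<and> (\<forall>a\<in>AR R. \<psi> a = trace (\<rho> ** a))"
proof -
  have sR: "sym R" and rR: "refl R" using t unfolding tolerance_def by auto
  have l: "lin_on (AR R) \<psi>" and pos: "\<And>a. a \<in> AR R \<Longrightarrow> psd a \<Longrightarrow> 0 \<le> \<psi> a"
    and one: "\<psi> (mat 1) = 1" using s unfolding state_of_def by auto
  define \<sigma> where "\<sigma> = dens R \<psi>"
  have \<sigma>AR: "\<sigma> \<in> AR R" unfolding \<sigma>_def by (rule dens_AR[OF t])
  have \<sigma>h: "\<And>i j. \<sigma>$j$i = cnj (\<sigma>$i$j)" unfolding \<sigma>_def by (rule state_herm[OF t s])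
  have "\<sigma> \<in> Tmap R ` DD"
  proof (rule ccontr)
    assume nin: "\<sigma> \<notin> Tmap R ` DD"
    have cv: "convex (Tmap R ` DD)" by (rule convex_linear_image[OF linear_Tmap convex_DD])
    have "continuous_on DD (Tmap R)"
      using linear_Tmap[of R] unfolding linear_conv_bounded_linear by (rule linear_continuous_on)
    then have cl: "closed (Tmap R ` DD)"
      using compact_DD by (intro compact_imp_closed compact_continuous_image)
    obtain a b where ab1: "inner a \<sigma> < b" and ab2: "\<And>x. x \<in> Tmap R ` DD \<Longrightarrow> b < inner a x"
      using separating_hyperplane_closed_point[OF cv cl nin] by blast
    define c where "c = hermc R a"
    have cAR: "c \<in> AR R" unfolding AR_iff c_def hermc_def using sR by (auto simp: sym_def)
    define c' where "c' = c + msmult (- of_real b) (mat 1)"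
    have c'AR: "c' \<in> AR R" unfolding c'_def by (intro AR_add AR_msmult AR_mat1 cAR rR)
    have key: "b < Re (sf c y y) \<and> sf c y y = of_real (Re (sf c y y))" if y: "norm y = 1" for y
    proof -
      have "Pv y \<in> DD" unfolding DD_def using psd_Pv trace_Pv_self[of y] y by simp
      then have lt: "b < inner a (Tmap R (Pv y))" using ab2 by blast
      have "sf c y y = trace (Pv y ** c)" by (simp add: trace_Pv)
      also have "\<dots> = of_real (inner a (Tmap R (Pv y)))" unfolding c_def
        by (rule trace_hermc[OF sR]) (simp add: Pv_nth)
      finally show ?thesis using lt by simp
    qed
    have pc': "psd c'"
      unfolding psd_sf
    proof
      fix x :: "complex^_"
      show "0 \<le> sf c' x x"
      proof (cases "x = 0")
        case True then show ?thesis by simp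
      next
        case False
        then have n: "norm x > 0" by simp
        define y where "y = (1 / norm x) *\<^sub>R x"
        have ny: "norm y = 1" unfolding y_def using n by simp
        have xy: "x = of_real (norm x) *s y" unfolding y_def scaleR_as_smult using n
          by (simp add: vec_eq_iff)
        define r where "r = Re (sf c y y)"
        have k1: "b < r" and k2: "sf c y y = of_real r" using key[OF ny] unfolding r_def by auto
        have "sf c x x = of_real (norm x ^ 2) * sf c y y"
          by (subst xy, subst xy) (simp add: sf_scale_left sf_scale_right power2_eq_square)
        then have "sf c' x x = of_real (norm x ^ 2 * (r - b))"
          unfolding c'_def sf_mat_add sf_msmult sf_mat1 k2
          by (simp add: algebra_simps)
        then show ?thesis using k1 by (simp add: less_eq_complex_def)
      qed
    qed
    have "0 \<le> \<psi> c'" by (rule pos[OF c'AR pc'])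
    moreover have "\<psi> c' = \<psi> c - of_real b"
    proof -
      have "\<psi> c' = \<psi> c + \<psi> (msmult (- of_real b) (mat 1))"
        unfolding c'_def using l cAR AR_msmult[OF AR_mat1[OF rR]] unfolding lin_on_def by blast
      also have "\<psi> (msmult (- of_real b) (mat 1)) = - of_real b * \<psi> (mat 1)"
        using l AR_mat1[OF rR] unfolding lin_on_def by blast
      finally show ?thesis using one by simp
    qed
    moreover have "\<psi> c = of_real (inner a \<sigma>)"
    proof -
      have "\<psi> c = trace (\<sigma> ** c)" unfolding \<sigma>_def by (rule lin_rep[OF l cAR])
      also have "\<dots> = of_real (inner a (Tmap R \<sigma>))" unfolding c_def
        by (rule trace_hermc[OF sR \<sigma>h])
      finally show ?thesis using Tmap_AR[OF \<sigma>AR] by simp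
    qed
    ultimately show False using ab1 by (simp add: less_eq_complex_def)
  qed
  then obtain \<rho> where \<rho>: "\<rho> \<in> DD" "Tmap R \<rho> = \<sigma>" by blast
  have "\<forall>a\<in>AR R. \<psi> a = trace (\<rho> ** a)"
  proof
    fix a assume a: "a \<in> AR R"
    have "\<psi> a = trace (\<sigma> ** a)" unfolding \<sigma>_def by (rule lin_rep[OF l a])
    also have "\<dots> = trace (\<rho> ** a)" unfolding \<rho>(2)[symmetric] by (rule trace_Tmap[OF sR a])
    finally show "\<psi> a = trace (\<rho> ** a)" .
  qed
  then show ?thesis using \<rho>(1) unfolding DD_def by blast
qed

definition vst :: "('n::finite \<times> 'n) set \<Rightarrow> complex^'n \<Rightarrow> (complex^'n^'n \<Rightarrow> complex)" where
  "vst R w = restr_to (AR R) (\<lambda>a. trace (Pv w ** a))"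

lemma trace_matunit: "trace (X ** matunit p q) = X$q$p"
proof -
  have "trace (X ** matunit p q) = (\<Sum>i\<in>UNIV. if i = q then X$i$p else 0)"
    unfolding trace_mult
  proof (intro sum.cong refl)
    fix i
    have "(\<Sum>j\<in>UNIV. X$i$j * matunit p q $j$i) = (\<Sum>j\<in>UNIV. if j = p then (if i = q then X$i$j else 0) else 0)"
      by (intro sum.cong refl) (auto simp: matunit_nth)
    then show "(\<Sum>j\<in>UNIV. X$i$j * matunit p q $j$i) = (if i = q then X$i$p else 0)" by simp
  qed
  then show ?thesis by simp
qed

lemma matunit_Pv: "matunit k k = Pv (axis k 1)"
  by (simp add: vec_eq_iff matunit_nth Pv_nth axis_def)

lemma psd_matunit: "psd (matunit k k)"
  unfolding matunit_Pv by (rule psd_Pv)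

lemma comb_zero:
  fixes p q :: complex and t :: real
  assumes "0 \<le> p" "0 \<le> q" "0 < t" "t < 1" "of_real t * p + of_real (1 - t) * q = 0"
  shows "p = 0"
proof -
  have "Im p = 0" "Im q = 0" "0 \<le> Re p" "0 \<le> Re q" using assms(1,2) by (auto simp: less_eq_complex_def)
  moreover have "t * Re p + (1 - t) * Re q = 0" using arg_cong[OF assms(5), of Re] by simp
  ultimately have "Re p = 0" using assms(3,4)
    by (smt (verit) mult_nonneg_nonneg mult_pos_pos)
  then show ?thesis using \<open>Im p = 0\<close> by (simp add: complex_eq_iff)
qed

lemma Tmap_cong_trace:
  assumes "sym R" "a \<in> AR R" "\<And>i j. (i,j) \<in> R \<Longrightarrow> X$i$j = Y$i$j"
  shows "trace (X ** a) = trace (Y ** a)"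
proof -
  have "Tmap R X = Tmap R Y" using assms(3) by (simp add: vec_eq_iff Tmap_nth)
  then show ?thesis using trace_Tmap[OF assms(1,2), of X] trace_Tmap[OF assms(1,2), of Y] by simp
qed

lemma vst_Tmap:
  assumes "tolerance R"
  shows "restr_to (AR R) (\<lambda>a. trace (Tmap R (Pv v) ** a)) = vst R v"
  unfolding vst_def restr_to_def using assms trace_Tmap unfolding tolerance_def by fastforce

lemma vst_state:
  assumes "tolerance R" "norm w = 1"
  shows "state_of (AR R) (vst R w)"
  unfolding vst_def using assms by (intro state_from_density psd_Pv) (simp_all add: trace_Pv_self)

lemma ip_axis2: "ip (\<alpha> *s axis i 1 + \<beta> *s axis j 1) v = cnj \<alpha> * v$i + cnj \<beta> * v$j"
proof -
  have "ip (\<alpha> *s axis i 1 + \<beta> *s axis j 1) v =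
        (\<Sum>k\<in>UNIV. (if k = i then cnj \<alpha> * v$k else 0) + (if k = j then cnj \<beta> * v$k else 0))"
    unfolding ip_def by (intro sum.cong refl) (auto simp: axis_def algebra_simps)
  then show ?thesis by (simp add: sum.distrib)
qed

lemma sf_axis2_left: "sf \<rho> (axis k 1) (\<alpha> *s axis i 1 + \<beta> *s axis j 1) = \<alpha> * \<rho>$k$i + \<beta> * \<rho>$k$j"
  by (simp add: sf_add_right sf_scale_right sf_axis)

lemma Rv_sym: "sym R \<Longrightarrow> (i,j) \<in> Rv R v \<Longrightarrow> (j,i) \<in> Rv R v"
  unfolding Rv_def sym_def by (auto simp: mult.commute)

lemma core:
  assumes t: "tolerance R" and nv: "norm v = 1" and tol: "R_tolerant R v"
    and p: "psd \<rho>" and tr: "trace \<rho> = 1"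
    and h0: "\<And>k. v$k = 0 \<Longrightarrow> \<rho>$k$k = 0"
    and hx: "\<And>i j. (i,j) \<in> R \<Longrightarrow> v$i \<noteq> 0 \<Longrightarrow> v$j \<noteq> 0 \<Longrightarrow>
        sf \<rho> (cnj (v$j) *s axis i 1 + (- cnj (v$i)) *s axis j 1) (cnj (v$j) *s axis i 1 + (- cnj (v$i)) *s axis j 1) = 0"
    and ij: "(i,j) \<in> R"
  shows "\<rho>$i$j = v$i * cnj (v$j)"
proof -
  have sR: "sym R" using t unfolding tolerance_def by auto
  define c where "c k = \<rho>$k$k / (v$k * cnj (v$k))" for k
  have diag_real: "cnj (\<rho>$k$k) = \<rho>$k$k" for k using psd_herm[OF p, of k k] by simp
  have edge: "\<rho>$a$b = c a * v$a * cnj (v$b) \<and> c a = c b"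
    if ab: "(a,b) \<in> R" and va: "v$a \<noteq> 0" and vb: "v$b \<noteq> 0" for a b
  proof -
    let ?x = "cnj (v$b) *s axis a 1 + (- cnj (v$a)) *s axis b 1"
    have z: "sf \<rho> ?x ?x = 0" by (rule hx[OF ab va vb])
    have E1: "cnj (v$b) * \<rho>$a$a + (- cnj (v$a)) * \<rho>$a$b = 0"
      using psd_null[OF p z, of "axis a 1"] by (simp only: sf_axis2_left)
    have E2: "cnj (v$b) * \<rho>$b$a + (- cnj (v$a)) * \<rho>$b$b = 0"
      using psd_null[OF p z, of "axis b 1"] by (simp only: sf_axis2_left)
    have cva: "cnj (v$a) \<noteq> 0" "cnj (v$b) \<noteq> 0" using va vb by auto
    have r1: "\<rho>$a$b = c a * v$a * cnj (v$b)"
      using E1 va vb cva unfolding c_def by (simp add: field_simps)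
    have "\<rho>$b$a = cnj (\<rho>$a$b)" by (rule psd_herm[OF p])
    also have "\<dots> = cnj (c a) * cnj (v$a) * v$b" using r1 by simp
    also have "cnj (c a) = c a" unfolding c_def using diag_real[of a] by (simp add: mult.commute)
    finally have r2: "\<rho>$b$a = c a * cnj (v$a) * v$b" .
    have "\<rho>$b$b = c b * (v$b * cnj (v$b))" unfolding c_def using vb by simp
    then have "cnj (v$b) * (c a * cnj (v$a) * v$b) = cnj (v$a) * (c b * (v$b * cnj (v$b)))"
      using E2 r2 by (simp add: algebra_simps)
    then have "(c a - c b) * (cnj (v$a) * v$b * cnj (v$b)) = 0" by (simp add: algebra_simps)
    then have "c a = c b" using va vb by simp
    then show ?thesis using r1 by simp
  qed
  have vne: "v \<noteq> 0" using nv by auto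
  then obtain k0 where k0: "v$k0 \<noteq> 0" by (auto simp: vec_eq_iff)
  have const: "c k = c k0" if vk: "v$k \<noteq> 0" for k
  proof -
    have "(k0,k) \<in> (Rv R v)\<^sup>*" using tol k0 vk unfolding R_tolerant_def by blast
    then show ?thesis
    proof (induction rule: rtrancl_induct)
      case base then show ?case by simp
    next
      case (step y z)
      then have "(y,z) \<in> R" "v$y \<noteq> 0" "v$z \<noteq> 0" unfolding Rv_def by auto
      then show ?case using edge step.IH by metis
    qed
  qed
  define C where "C = c k0"
  have diagC: "\<rho>$k$k = C * (v$k * cnj (v$k))" for k
  proof (cases "v$k = 0")
    case True then show ?thesis using h0 by simp
  next
    case False
    have "\<rho>$k$k = c k * (v$k * cnj (v$k))" unfolding c_def using False by simp
    then show ?thesis using const[OF False] unfolding C_def by simp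
  qed
  have "1 = (\<Sum>k\<in>UNIV. \<rho>$k$k)" using tr by (simp add: trace_def)
  also have "\<dots> = C * (\<Sum>k\<in>UNIV. v$k * cnj (v$k))" by (simp add: diagC sum_distrib_left)
  also have "(\<Sum>k\<in>UNIV. v$k * cnj (v$k)) = trace (Pv v)" by (simp add: trace_def Pv_nth)
  also have "\<dots> = 1" using nv by (simp add: trace_Pv_self)
  finally have C1: "C = 1" by simp
  show ?thesis
  proof (cases "v$i = 0 \<or> v$j = 0")
    case True
    then have "\<rho>$i$i = 0 \<or> \<rho>$j$j = 0" using h0 by blast
    then have "\<rho>$i$j = 0" by (rule psd_offdiag_zero[OF p])
    then show ?thesis using True by auto
  next
    case False
    then have "\<rho>$i$j = c i * v$i * cnj (v$j)" using edge[OF ij] by blast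
    then show ?thesis using const[of i] False C1 unfolding C_def by simp
  qed
qed

lemma state_pos: "state_of (AR R) \<psi> \<Longrightarrow> a \<in> AR R \<Longrightarrow> psd a \<Longrightarrow> 0 \<le> \<psi> a"
  unfolding state_of_def by blast

lemma state_out: "state_of (AR R) \<psi> \<Longrightarrow> a \<notin> AR R \<Longrightarrow> \<psi> a = 0"
  unfolding state_of_def by blast

lemma vst_in: "a \<in> AR R \<Longrightarrow> vst R w a = trace (Pv w ** a)"
  by (simp add: vst_def restr_to_def)

lemma vst_out: "a \<notin> AR R \<Longrightarrow> vst R w a = 0"
  by (simp add: vst_def restr_to_def)

lemma tolerant_pure:
  assumes t: "tolerance R" and nv: "norm v = 1" and tol: "R_tolerant R v"
  shows "pure_state_of (AR R) (vst R v)"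
proof -
  have rR: "refl R" and sR: "sym R" using t unfolding tolerance_def by auto
  have st: "state_of (AR R) (vst R v)" by (rule vst_state[OF t nv])
  have main: "\<psi>1 = vst R v"
    if s1: "state_of (AR R) \<psi>1" and s2: "state_of (AR R) \<psi>2" and t0: "0 < \<tau>" "\<tau> < 1"
      and dec: "vst R v = (\<lambda>a. of_real \<tau> * \<psi>1 a + of_real (1 - \<tau>) * \<psi>2 a)" for \<psi>1 \<psi>2 \<tau>
  proof -
    obtain \<rho> where p: "psd \<rho>" and tr: "trace \<rho> = 1" and rep: "\<And>a. a \<in> AR R \<Longrightarrow> \<psi>1 a = trace (\<rho> ** a)"
      using extension[OF t s1] by blast
    have decA: "\<And>a. vst R v a = of_real \<tau> * \<psi>1 a + of_real (1 - \<tau>) * \<psi>2 a"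
      using dec by metis
    have zero1: "\<psi>1 a = 0" if a: "a \<in> AR R" "psd a" and z: "vst R v a = 0" for a
      using comb_zero[OF state_pos[OF s1 a] state_pos[OF s2 a] t0] decA[of a] z by simp
    have h0: "\<rho>$k$k = 0" if vk: "v$k = 0" for k
    proof -
      have kk: "(k,k) \<in> R" using rR by (simp add: refl_on_def)
      have aE: "matunit k k \<in> AR R" by (rule AR_matunit[OF kk])
      have "vst R v (matunit k k) = 0" using vk by (simp add: vst_in[OF aE] trace_matunit Pv_nth)
      then have "\<psi>1 (matunit k k) = 0" using zero1 aE psd_matunit by blast
      then show ?thesis using rep[OF aE] by (simp add: trace_matunit)
    qed
    have hx: "sf \<rho> (cnj (v$j) *s axis i 1 + (- cnj (v$i)) *s axis j 1) (cnj (v$j) *s axis i 1 + (- cnj (v$i)) *s axis j 1) = 0"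
      if ij: "(i,j) \<in> R" for i j
    proof -
      let ?x = "cnj (v$j) *s axis i 1 + (- cnj (v$i)) *s axis j 1"
      have ax: "Pv ?x \<in> AR R" by (rule Pv_AR[OF t ij])
      have "ip ?x v = 0" unfolding ip_axis2 by (simp add: mult.commute)
      then have "vst R v (Pv ?x) = 0" unfolding vst_in[OF ax] trace_Pv sf_Pv by simp
      then have "\<psi>1 (Pv ?x) = 0" using zero1 ax psd_Pv by blast
      then have "trace (\<rho> ** Pv ?x) = 0" using rep[OF ax] by simp
      then show ?thesis by (metis trace_mul_sym trace_Pv)
    qed
    have ent: "\<And>i j. (i,j) \<in> R \<Longrightarrow> \<rho>$i$j = (Pv v)$i$j"
      unfolding Pv_nth by (rule core[OF t nv tol p tr h0 hx]) auto
    show "\<psi>1 = vst R v"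
    proof
      fix a
      show "\<psi>1 a = vst R v a"
      proof (cases "a \<in> AR R")
        case True
        then show ?thesis using rep[OF True] vst_in[OF True] Tmap_cong_trace[OF sR True ent] by simp
      next
        case False
        then show ?thesis using state_out[OF s1 False] vst_out[OF False] by simp
      qed
    qed
  qed
  show ?thesis
    unfolding pure_state_of_def
  proof (intro conjI[OF st] allI impI)
    fix \<psi>1 \<psi>2 and \<tau> :: real
    assume H: "state_of (AR R) \<psi>1 \<and> state_of (AR R) \<psi>2 \<and> 0 < \<tau> \<and> \<tau> < 1 \<and>
      vst R v = (\<lambda>a. of_real \<tau> * \<psi>1 a + of_real (1 - \<tau>) * \<psi>2 a)"
    then have s1: "state_of (AR R) \<psi>1" and s2: "state_of (AR R) \<psi>2" and t0: "0 < \<tau>" "\<tau> < 1"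
      and dec: "vst R v = (\<lambda>a. of_real \<tau> * \<psi>1 a + of_real (1 - \<tau>) * \<psi>2 a)" by auto
    have g1: "\<psi>1 = vst R v" by (rule main[OF s1 s2 t0 dec])
    have dec': "vst R v = (\<lambda>a. of_real (1 - \<tau>) * \<psi>2 a + of_real (1 - (1 - \<tau>)) * \<psi>1 a)"
      using dec by (simp add: add.commute)
    have "\<psi>2 = vst R v" by (rule main[OF s2 s1 _ _ dec']) (use t0 in auto)
    then show "\<psi>1 = vst R v \<and> \<psi>2 = vst R v" using g1 by simp
  qed
qed

lemma sf_scale_both: "sf a (of_real s *s x) (of_real s *s x) = of_real (s^2) * sf a x x"
  by (simp add: sf_scale_left sf_scale_right power2_eq_square)

lemma pure_tolerant:
  assumes t: "tolerance R" and nv: "norm v = 1" and pure: "pure_state_of (AR R) (vst R v)"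
  shows "R_tolerant R v"
proof (rule ccontr)
  assume ntol: "\<not> R_tolerant R v"
  have rR: "refl R" and sR: "sym R" using t unfolding tolerance_def by auto
  have vne: "v \<noteq> 0" using nv by auto
  then obtain i j where vi: "v$i \<noteq> 0" and vj: "v$j \<noteq> 0" and nij: "(i,j) \<notin> (Rv R v)\<^sup>*"
    using ntol unfolding R_tolerant_def by blast
  define C where "C = {k. (i,k) \<in> (Rv R v)\<^sup>*}"
  define v1 where "v1 = (\<chi> k. if k \<in> C then v$k else 0)"
  define v2 where "v2 = (\<chi> k. if k \<in> C then 0 else v$k)"
  have iC: "i \<in> C" and jC: "j \<notin> C" using nij unfolding C_def by auto
  have vsum: "v = v1 + v2" unfolding v1_def v2_def by (simp add: vec_eq_iff)
  have closedC: "l \<in> C" if "k \<in> C" "(k,l) \<in> R" "v$k \<noteq> 0" "v$l \<noteq> 0" for k l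
  proof -
    have "(k,l) \<in> Rv R v" using that unfolding Rv_def by auto
    then show ?thesis using that(1) unfolding C_def by (auto intro: rtrancl_into_rtrancl)
  qed
  have cross1: "sf a v1 v2 = 0" if a: "a \<in> AR R" for a
    unfolding sf_def
  proof (intro sum.neutral ballI)
    fix k l
    show "cnj (v1$k) * a$k$l * v2$l = 0"
    proof (cases "k \<in> C \<and> l \<notin> C \<and> v$k \<noteq> 0 \<and> v$l \<noteq> 0")
      case True
      then have "(k,l) \<notin> R" using closedC by blast
      then have "a$k$l = 0" using a by (simp add: AR_iff)
      then show ?thesis by simp
    next
      case False
      then show ?thesis unfolding v1_def v2_def by auto
    qed
  qed
  have cross2: "sf a v2 v1 = 0" if a: "a \<in> AR R" for a
    unfolding sf_def
  proof (intro sum.neutral ballI)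
    fix k l
    show "cnj (v2$k) * a$k$l * v1$l = 0"
    proof (cases "l \<in> C \<and> k \<notin> C \<and> v$k \<noteq> 0 \<and> v$l \<noteq> 0")
      case True
      then have "(l,k) \<notin> R" using closedC by blast
      then have "(k,l) \<notin> R" using sR by (auto simp: sym_def)
      then have "a$k$l = 0" using a by (simp add: AR_iff)
      then show ?thesis by simp
    next
      case False
      then show ?thesis unfolding v1_def v2_def by auto
    qed
  qed
  define n1 where "n1 = norm v1 ^ 2"
  define n2 where "n2 = norm v2 ^ 2"
  have n12: "n1 + n2 = 1"
  proof -
    have "n1 + n2 = (\<Sum>k\<in>UNIV. cmod (v1$k) ^ 2 + cmod (v2$k) ^ 2)"
      unfolding n1_def n2_def norm_sq by (simp add: sum.distrib)
    also have "\<dots> = (\<Sum>k\<in>UNIV. cmod (v$k) ^ 2)"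
      unfolding v1_def v2_def by (intro sum.cong refl) auto
    also have "\<dots> = 1" using nv by (simp add: norm_sq[symmetric])
    finally show ?thesis .
  qed
  have n1pos: "n1 > 0"
  proof -
    have "cmod (v1$i) ^ 2 \<le> (\<Sum>k\<in>UNIV. cmod (v1$k) ^ 2)" by (rule member_le_sum) auto
    moreover have "v1$i = v$i" using iC unfolding v1_def by simp
    ultimately show ?thesis using vi unfolding n1_def norm_sq
      by (smt (verit) zero_less_norm_iff zero_less_power)
  qed
  have n2pos: "n2 > 0"
  proof -
    have "cmod (v2$j) ^ 2 \<le> (\<Sum>k\<in>UNIV. cmod (v2$k) ^ 2)" by (rule member_le_sum) auto
    moreover have "v2$j = v$j" using jC unfolding v2_def by simp
    ultimately show ?thesis using vj unfolding n2_def norm_sq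
      by (smt (verit) zero_less_norm_iff zero_less_power)
  qed
  define u1 where "u1 = of_real (1 / sqrt n1) *s v1"
  define u2 where "u2 = of_real (1 / sqrt n2) *s v2"
  have nu1: "norm u1 = 1"
  proof -
    have "norm v1 = sqrt n1" unfolding n1_def by simp
    then show ?thesis unfolding u1_def scaleR_as_smult[symmetric] using n1pos by simp
  qed
  have nu2: "norm u2 = 1"
  proof -
    have "norm v2 = sqrt n2" unfolding n2_def by simp
    then show ?thesis unfolding u2_def scaleR_as_smult[symmetric] using n2pos by simp
  qed
  have su1: "sf a v1 v1 = of_real n1 * sf a u1 u1" for a
    unfolding u1_def sf_scale_both using n1pos by (simp add: power_divide)
  have su2: "sf a v2 v2 = of_real n2 * sf a u2 u2" for a
    unfolding u2_def sf_scale_both using n2pos by (simp add: power_divide)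
  have dec: "vst R v = (\<lambda>a. of_real n1 * vst R u1 a + of_real (1 - n1) * vst R u2 a)"
  proof
    fix a
    show "vst R v a = of_real n1 * vst R u1 a + of_real (1 - n1) * vst R u2 a"
    proof (cases "a \<in> AR R")
      case True
      have "vst R v a = sf a v v" by (simp add: vst_in[OF True] trace_Pv)
      also have "\<dots> = sf a v1 v1 + sf a v2 v2"
        unfolding vsum sf_add_left sf_add_right cross1[OF True] cross2[OF True] by simp
      also have "\<dots> = of_real n1 * vst R u1 a + of_real (1 - n1) * vst R u2 a"
        using n12 by (simp add: su1 su2 vst_in[OF True] trace_Pv eq_diff_eq[symmetric])
      finally show ?thesis .
    next
      case False
      then show ?thesis by (simp add: vst_out)
    qed
  qed
  have "vst R u1 = vst R v"
    using pure vst_state[OF t nu1] vst_state[OF t nu2] n1pos n12 n2pos dec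
    unfolding pure_state_of_def by (metis add.commute less_add_same_cancel2)
  moreover have jj: "matunit j j \<in> AR R" using rR by (intro AR_matunit) (simp add: refl_on_def)
  moreover have "vst R u1 (matunit j j) = 0"
    using jC by (simp add: vst_in[OF jj] trace_matunit Pv_nth u1_def v1_def)
  moreover have "vst R v (matunit j j) \<noteq> 0"
    using vj by (simp add: vst_in[OF jj] trace_matunit Pv_nth)
  ultimately show False by simp
qed

lemma phase_eq:
  assumes nw1: "norm w1 = 1" and tol1: "R_tolerant R w1" and rR: "refl R"
    and eq: "\<And>i j. (i,j) \<in> R \<Longrightarrow> w2$i * cnj (w2$j) = w1$i * cnj (w1$j)"
  shows "Pv w2 = Pv w1"
proof -
  have diag: "w2$k * cnj (w2$k) = w1$k * cnj (w1$k)" for k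
    using eq[of k k] rR by (simp add: refl_on_def)
  have "w1 \<noteq> 0" using nw1 by auto
  then obtain k0 where k0: "w1$k0 \<noteq> 0" by (auto simp: vec_eq_iff)
  define ph where "ph = w2$k0 / w1$k0"
  have lam: "ph * cnj ph = 1"
    unfolding ph_def using diag[of k0] k0 by (simp add: field_simps)
  have phs: "w2$k = ph * w1$k" if "(k0,k) \<in> (Rv R w1)\<^sup>*" for k
    using that
  proof (induction rule: rtrancl_induct)
    case base then show ?case unfolding ph_def using k0 by simp
  next
    case (step y z)
    then have yz: "(y,z) \<in> R" "w1$y \<noteq> 0" "w1$z \<noteq> 0" unfolding Rv_def by auto
    have "ph * w1$y * cnj (w2$z) = w1$y * cnj (w1$z)" using eq[OF yz(1)] step.IH by simp
    then have "ph * cnj (w2$z) = cnj (w1$z)" using yz(2) by (simp add: mult.assoc mult.left_commute)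
    then have "cnj ph * w2$z = w1$z" by (metis complex_cnj_cnj complex_cnj_mult)
    then have "ph * (cnj ph * w2$z) = ph * w1$z" by simp
    then show ?case using lam by (simp add: mult.assoc[symmetric])
  qed
  have all: "w2$k = ph * w1$k" for k
  proof (cases "w1$k = 0")
    case True
    then have "w2$k * cnj (w2$k) = 0" using diag[of k] by simp
    then show ?thesis using True by simp
  next
    case False
    then have "(k0,k) \<in> (Rv R w1)\<^sup>*" using tol1 k0 unfolding R_tolerant_def by blast
    then show ?thesis by (rule phs)
  qed
  show ?thesis
  proof -
    have "w2$i * cnj (w2$j) = w1$i * cnj (w1$j)" for i j
    proof -
      have "w2$i * cnj (w2$j) = (ph * cnj ph) * (w1$i * cnj (w1$j))" unfolding all by (simp add: mult_ac)
      then show ?thesis using lam by simp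
    qed
    then show ?thesis by (simp add: vec_eq_iff Pv_nth)
  qed
qed

lemma psd_trace0:
  assumes p: "psd \<rho>" and tr: "trace \<rho> = 0"
  shows "\<rho> = 0"
proof -
  have d0: "0 \<le> Re (\<rho>$k$k)" "Im (\<rho>$k$k) = 0" for k using psd_diag[OF p, of k] by (auto simp: less_eq_complex_def)
  have "(\<Sum>k\<in>UNIV. Re (\<rho>$k$k)) = 0" using arg_cong[OF tr, of Re] by (simp add: trace_def Re_sum)
  then have "\<forall>k\<in>UNIV. Re (\<rho>$k$k) = 0" using d0(1) by (subst sum_nonneg_eq_0_iff[symmetric]) auto
  then have "\<rho>$k$k = 0" for k using d0(2) by (simp add: complex_eq_iff)
  then have "\<rho>$i$j = 0" for i j using psd_offdiag_zero[OF p] by blast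
  then show ?thesis by (simp add: vec_eq_iff)
qed

lemma trace_scaleR_left: "trace ((c *\<^sub>R X) ** a) = of_real c * trace (X ** (a::complex^'n::finite^'n))"
proof -
  have e: "\<And>i j. (c *\<^sub>R X)$i$j = of_real c * X$i$j"
    by (metis vector_scaleR_component scaleR_conv_of_real)
  show ?thesis unfolding trace_mult e by (simp add: sum_distrib_left mult_ac)
qed

lemma psd_mat1: "psd (mat 1)"
  unfolding psd_sf sf_mat1 by (simp add: less_eq_complex_def)

lemma pure_is_vector:
  assumes t: "tolerance R" and pure: "pure_state_of (AR R) \<phi>"
  shows "\<exists>u. norm u = 1 \<and> \<phi> = vst R u"
proof -
  have s: "state_of (AR R) \<phi>" using pure unfolding pure_state_of_def by blast
  obtain \<rho> where p: "psd \<rho>" and tr: "trace \<rho> = 1" and rep: "\<And>a. a \<in> AR R \<Longrightarrow> \<phi> a = trace (\<rho> ** a)"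
    using extension[OF t s] by blast
  obtain us where us: "\<rho> = sum_list (map Pv us)" and nz: "\<forall>u\<in>set us. u \<noteq> 0"
    using psd_decomp[OF p] by blast
  have "us \<noteq> []" using tr us by (auto simp: trace_def)
  then obtain u0 rest where ur: "us = u0 # rest" by (cases us) auto
  define \<rho>' where "\<rho>' = sum_list (map Pv rest)"
  have p': "psd \<rho>'" unfolding \<rho>'_def by (rule psd_sum_list) (rule psd_Pv)
  have \<rho>dec: "\<rho> = Pv u0 + \<rho>'" unfolding us ur \<rho>'_def by simp
  define n where "n = norm u0 ^ 2"
  have npos: "n > 0" using nz ur unfolding n_def by simp
  have tr': "trace \<rho>' = of_real (1 - n)"
    using tr unfolding \<rho>dec trace_add trace_Pv_self n_def by (simp add: algebra_simps)
  have "0 \<le> trace (\<rho>' ** mat 1)" by (rule trace_psd_nonneg[OF p' psd_mat1])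
  then have nle: "n \<le> 1" using tr' by (simp add: matrix_mul_rid less_eq_complex_def)
  define u where "u = of_real (1 / sqrt n) *s u0"
  have nu: "norm u = 1"
  proof -
    have "norm u0 = sqrt n" unfolding n_def by simp
    then show ?thesis unfolding u_def scaleR_as_smult[symmetric] using npos by simp
  qed
  have su: "sf a u0 u0 = of_real n * sf a u u" for a
    unfolding u_def sf_scale_both using npos by (simp add: power_divide)
  have trsplit: "trace (\<rho> ** a) = of_real n * vst R u a + trace (\<rho>' ** a)" if a: "a \<in> AR R" for a
    unfolding \<rho>dec trace_add_left vst_in[OF a] trace_Pv su ..
  show ?thesis
  proof (cases "n = 1")
    case True
    then have "\<rho>' = 0" using psd_trace0[OF p'] tr' by simp
    have z: "\<And>a. trace ((0::complex^_^_) ** a) = 0" by (simp add: trace_def)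
    have "\<phi> = vst R u"
    proof
      fix a
      show "\<phi> a = vst R u a"
      proof (cases "a \<in> AR R")
        case True
        then show ?thesis using rep[OF True] trsplit[OF True] \<open>n = 1\<close> \<open>\<rho>' = 0\<close> z by simp
      next
        case False
        then show ?thesis using state_out[OF s False] vst_out[OF False] by simp
      qed
    qed
    then show ?thesis using nu by blast
  next
    case False
    then have n1: "n < 1" using nle by simp
    define \<psi>2 where "\<psi>2 = restr_to (AR R) (\<lambda>a. trace ((1 / (1 - n)) *\<^sub>R \<rho>' ** a))"
    have s2: "state_of (AR R) \<psi>2" unfolding \<psi>2_def
    proof (rule state_from_density[OF t])
      show "psd ((1 / (1 - n)) *\<^sub>R \<rho>')" using n1 by (intro psd_scaleR p') simp
      show "trace ((1 / (1 - n)) *\<^sub>R \<rho>') = 1" using n1 tr' by (simp add: trace_scaleR)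
    qed
    have dec: "\<phi> = (\<lambda>a. of_real n * vst R u a + of_real (1 - n) * \<psi>2 a)"
    proof
      fix a
      show "\<phi> a = of_real n * vst R u a + of_real (1 - n) * \<psi>2 a"
      proof (cases "a \<in> AR R")
        case True
        have "of_real (1 - n) * \<psi>2 a = trace (\<rho>' ** a)"
          unfolding \<psi>2_def restr_to_def using True n1 by (simp add: trace_scaleR_left)
        then show ?thesis using rep[OF True] trsplit[OF True] by simp
      next
        case False
        then show ?thesis using s vst_out[OF False] unfolding \<psi>2_def restr_to_def state_of_def by auto
      qed
    qed
    have "vst R u = \<phi>"
      using pure vst_state[OF t nu] s2 npos n1 dec unfolding pure_state_of_def by blast
    then show ?thesis using nu by metis
  qed
qed

lemma tolerance_UNIV: "tolerance UNIV" by (simp add: tolerance_def sym_def)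

lemma R_tolerant_UNIV: "v \<noteq> 0 \<Longrightarrow> R_tolerant UNIV v"
  unfolding R_tolerant_def Rv_def by auto

lemma vst_UNIV: "vst UNIV u = (\<lambda>a. trace (Pv u ** a))"
  by (simp add: vst_def AR_UNIV restr_UNIV)

lemma tps_form:
  assumes "R_tolerant_pure_state R \<phi>"
  obtains w where "norm w = 1" "R_tolerant R w" "\<phi> = (\<lambda>a. trace (Pv w ** a))"
  using assms unfolding R_tolerant_pure_state_def by blast

theorem proposition4p11:
  fixes R :: "('n::finite \<times> 'n) set" and v :: "complex^'n"
  assumes "tolerance R" and "norm v = 1"
  shows "(pure_state_of (AR R) (restr_to (AR R) (\<lambda>a. trace (Tmap R (Pv v) ** a)))
            \<longleftrightarrow> R_tolerant R v)
       \<and> bij_betw (restr_to (AR R)) {\<phi>. R_tolerant_pure_state R \<phi>} {\<phi>. pure_state_of (AR R) \<phi>}"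
proof -
  note t = assms(1)
  have rR: "refl R" and sR: "sym R" using t unfolding tolerance_def by auto
  have part1: "pure_state_of (AR R) (restr_to (AR R) (\<lambda>a. trace (Tmap R (Pv v) ** a))) \<longleftrightarrow> R_tolerant R v"
    unfolding vst_Tmap[OF t] using pure_tolerant[OF t assms(2)] tolerant_pure[OF t assms(2)] by blast
  have restr_vst: "restr_to (AR R) (\<lambda>a. trace (Pv w ** a)) = vst R w" for w
    by (simp add: vst_def)
  have inj: "inj_on (restr_to (AR R)) {\<phi>. R_tolerant_pure_state R \<phi>}"
  proof (rule inj_onI)
    fix \<phi>1 \<phi>2
    assume h1: "\<phi>1 \<in> {\<phi>. R_tolerant_pure_state R \<phi>}" and h2: "\<phi>2 \<in> {\<phi>. R_tolerant_pure_state R \<phi>}"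
      and eq: "restr_to (AR R) \<phi>1 = restr_to (AR R) \<phi>2"
    obtain w1 where w1: "norm w1 = 1" "R_tolerant R w1" "\<phi>1 = (\<lambda>a. trace (Pv w1 ** a))"
      using h1 tps_form by blast
    obtain w2 where w2: "norm w2 = 1" "R_tolerant R w2" "\<phi>2 = (\<lambda>a. trace (Pv w2 ** a))"
      using h2 tps_form by blast
    have veq: "vst R w1 = vst R w2" using eq unfolding w1(3) w2(3) restr_vst .
    have "w2$i * cnj (w2$j) = w1$i * cnj (w1$j)" if ij: "(i,j) \<in> R" for i j
    proof -
      have "(j,i) \<in> R" using ij sR by (auto simp: sym_def)
      then have a: "matunit j i \<in> AR R" by (rule AR_matunit)
      have "vst R w1 (matunit j i) = vst R w2 (matunit j i)" using veq by simp
      then show ?thesis by (simp add: vst_in[OF a] trace_matunit Pv_nth)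
    qed
    then have "Pv w2 = Pv w1" by (rule phase_eq[OF w1(1) w1(2) rR])
    then show "\<phi>1 = \<phi>2" unfolding w1(3) w2(3) by simp
  qed
  have img: "restr_to (AR R) ` {\<phi>. R_tolerant_pure_state R \<phi>} = {\<phi>. pure_state_of (AR R) \<phi>}"
  proof
    show "restr_to (AR R) ` {\<phi>. R_tolerant_pure_state R \<phi>} \<subseteq> {\<phi>. pure_state_of (AR R) \<phi>}"
    proof
      fix \<psi> assume "\<psi> \<in> restr_to (AR R) ` {\<phi>. R_tolerant_pure_state R \<phi>}"
      then obtain \<phi> where h: "R_tolerant_pure_state R \<phi>" and psi: "\<psi> = restr_to (AR R) \<phi>" by blast
      obtain w where w: "norm w = 1" "R_tolerant R w" "\<phi> = (\<lambda>a. trace (Pv w ** a))"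
        using h tps_form by blast
      have "\<psi> = vst R w" unfolding psi w(3) restr_vst ..
      then show "\<psi> \<in> {\<phi>. pure_state_of (AR R) \<phi>}" using tolerant_pure[OF t w(1) w(2)] by simp
    qed
    show "{\<phi>. pure_state_of (AR R) \<phi>} \<subseteq> restr_to (AR R) ` {\<phi>. R_tolerant_pure_state R \<phi>}"
    proof
      fix \<psi> assume "\<psi> \<in> {\<phi>. pure_state_of (AR R) \<phi>}"
      then have p: "pure_state_of (AR R) \<psi>" by simp
      obtain u where u: "norm u = 1" "\<psi> = vst R u" using pure_is_vector[OF t p] by blast
      have tolu: "R_tolerant R u" using pure_tolerant[OF t u(1)] p u(2) by simp
      have une: "u \<noteq> 0" using u(1) by auto
      have "pure_state_of (AR UNIV) (vst UNIV u)"
        by (rule tolerant_pure[OF tolerance_UNIV u(1) R_tolerant_UNIV[OF une]])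
      then have pu: "pure_state_of UNIV (\<lambda>a. trace (Pv u ** a))" by (simp add: vst_UNIV AR_UNIV)
      have "R_tolerant_pure_state R (\<lambda>a. trace (Pv u ** a))"
        unfolding R_tolerant_pure_state_def using pu u(1) tolu by blast
      moreover have "\<psi> = restr_to (AR R) (\<lambda>a. trace (Pv u ** a))" unfolding u(2) restr_vst ..
      ultimately show "\<psi> \<in> restr_to (AR R) ` {\<phi>. R_tolerant_pure_state R \<phi>}" by blast
    qed
  qed
  show ?thesis using part1 inj img unfolding bij_betw_def by blast
qed

end
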